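(* Let $k\ge 3$, let $\alpha$ be a primitive element of $\mathbb{F}_{2^k}$, and let $0\le j\le 2^k-2$. Define $S_j=\{\{(\alpha^j,\alpha^j x): x\in B_i\} : 1\le i\le 6\}$ and $\mathbb{S}_j=\{\langle A\rangle : A\in S_j\}$. Then $\mathbb{S}_j$ consists of six $k$-dimensional subspaces of $\mathbb{F}_2^{2k}$, each contained in $V_{\mathbf 0}^{(2k,k)}\cup V_{\alpha^j}^{(2k,k)}$, and every $2$-dimensional subspace $X\subseteq V_{\mathbf 0}^{(2k,k)}\cup V_{\alpha^j}^{(2k,k)}$ that is not contained in $V_{\mathbf 0}^{(2k,k)}$ is contained in at least one element of $\mathbb{S}_j$.
   Context: $\mathbb{F}_2^k$ is identified with $\mathbb{F}_{2^k}$ via a fixed $\mathbb{F}_2$-linear isomorphism (elements are written as binary $k$-tuples or as field elements interchangeably); $(a,b)\in\mathbb{F}_2^{2k}$ denotes concatenation of $a,b\in\mathbb{F}_2^k$, and $\langle A\rangle$ is the $\mathbb{F}_2$-span of $A$. For $x\in\mathbb{F}_2^\ell$, $V_x^{(n,\ell)}$ denotes the set of vectors of $\mathbb{F}_2^n$ whose first $\ell$ coordinates equal $x$. The sets $B_1,\dots,B_6\subseteq\mathbb{F}_2^k$ ($k\ge3$) are: $B_1$ = vectors with first coordinate $0$; $B_2$ = first coordinate $1$; $B_3$ = first two coordinates $00$ or $10$; $B_4$ = first two coordinates $01$ or $11$; $B_5$ = first two coordinates $00$ or $11$; $B_6$ = first two coordinates $01$ or $10$. *)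

theory Defs
  imports Main HOL.Vector_Spaces "HOL-Library.Z2" "HOL-Library.Function_Algebras"
begin

text \<open>The vector space F_2^n: functions nat => bit vanishing from index n on
  (coordinates are indexed 0..n-1, index 0 is the "first" coordinate).\<close>
definition F2vec :: "nat \<Rightarrow> (nat \<Rightarrow> bit) set" where
  "F2vec n = {v. \<forall>i\<ge>n. v i = 0}"

definition f2scale :: "bit \<Rightarrow> (nat \<Rightarrow> bit) \<Rightarrow> (nat \<Rightarrow> bit)" where
  "f2scale c v = (\<lambda>i. c * v i)"

abbreviation f2span :: "(nat \<Rightarrow> bit) set \<Rightarrow> (nat \<Rightarrow> bit) set" where
  "f2span A \<equiv> module.span f2scale A"

abbreviation f2subspace :: "(nat \<Rightarrow> bit) set \<Rightarrow> bool" where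
  "f2subspace A \<equiv> module.subspace f2scale A"

abbreviation f2dim :: "(nat \<Rightarrow> bit) set \<Rightarrow> nat" where
  "f2dim A \<equiv> vector_space.dim f2scale A"

definition concat :: "nat \<Rightarrow> (nat \<Rightarrow> bit) \<Rightarrow> (nat \<Rightarrow> bit) \<Rightarrow> (nat \<Rightarrow> bit)" where
  "concat k a b = (\<lambda>i. if i < k then a i else b (i - k))"

definition Vset :: "nat \<Rightarrow> nat \<Rightarrow> (nat \<Rightarrow> bit) \<Rightarrow> (nat \<Rightarrow> bit) set" where
  "Vset n l x = {v \<in> F2vec n. \<forall>i<l. v i = x i}"

definition Bset :: "nat \<Rightarrow> nat \<Rightarrow> (nat \<Rightarrow> bit) set" where
  "Bset k i =
     (if i = 1 then {v \<in> F2vec k. v 0 = 0}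
      else if i = 2 then {v \<in> F2vec k. v 0 = 1}
      else if i = 3 then {v \<in> F2vec k. (v 0, v 1) = (0,0) \<or> (v 0, v 1) = (1,0)}
      else if i = 4 then {v \<in> F2vec k. (v 0, v 1) = (0,1) \<or> (v 0, v 1) = (1,1)}
      else if i = 5 then {v \<in> F2vec k. (v 0, v 1) = (0,0) \<or> (v 0, v 1) = (1,1)}
      else if i = 6 then {v \<in> F2vec k. (v 0, v 1) = (0,1) \<or> (v 0, v 1) = (1,0)}
      else {})"

definition primitive_elem :: "'a::field \<Rightarrow> bool" where
  "primitive_elem \<alpha> \<longleftrightarrow> {\<alpha> ^ n | n. True} = UNIV - {0}"

text \<open>The set S_j, given the fixed identification phi : F_2^k -> F_(2^k).
  A field element y is written as the k-tuple inv_into (F2vec k) phi y.\<close>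
definition Sj :: "nat \<Rightarrow> ((nat \<Rightarrow> bit) \<Rightarrow> 'a::field) \<Rightarrow> 'a \<Rightarrow> nat \<Rightarrow> (nat \<Rightarrow> bit) set set" where
  "Sj k \<phi> \<alpha> j =
     {{concat k (inv_into (F2vec k) \<phi> (\<alpha> ^ j)) (inv_into (F2vec k) \<phi> (\<alpha> ^ j * \<phi> x)) | x. x \<in> Bset k i}
      | i. 1 \<le> i \<and> i \<le> 6}"

definition SSj :: "nat \<Rightarrow> ((nat \<Rightarrow> bit) \<Rightarrow> 'a::field) \<Rightarrow> 'a \<Rightarrow> nat \<Rightarrow> (nat \<Rightarrow> bit) set set" where
  "SSj k \<phi> \<alpha> j = f2span ` Sj k \<phi> \<alpha> j"

end

theory Submission
  imports Defs
begin


interpretation f2: vector_space f2scale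
  by unfold_locales (auto simp: f2scale_def fun_eq_iff algebra_simps)

lemma fun_bit_add_self[simp]: "(v::nat\<Rightarrow>bit) + v = 0"
  by (simp add: fun_eq_iff)

lemma fun_bit_minus: "(v::nat\<Rightarrow>bit) - w = v + w"
  by (simp add: fun_eq_iff)

lemma f2scale_0[simp]: "f2scale 0 v = 0" and f2scale_1[simp]: "f2scale 1 v = v"
  by (auto simp: f2scale_def fun_eq_iff)

lemma card_span_indep:
  assumes "finite B" "f2.independent B"
  shows "finite (f2span B) \<and> card (f2span B) = 2 ^ card B"
  using assms
proof (induction B rule: finite_induct)
  case empty
  then show ?case by (simp add: f2.span_empty)
next
  case (insert b B)
  have ind: "f2.independent B" and nb: "b \<notin> f2span B"
    using insert.prems insert.hyps by (auto simp: f2.independent_insert)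
  have eq: "f2span (insert b B) = f2span B \<union> (\<lambda>x. b + x) ` f2span B"
  proof -
    have "f2span (insert b B) = {x. \<exists>c. (x - f2scale c b) \<in> f2span B}"
      by (rule f2.span_insert)
    also have "\<dots> = f2span B \<union> (\<lambda>x. b + x) ` f2span B"
    proof (rule set_eqI, rule iffI)
      fix x assume "x \<in> {x. \<exists>c. (x - f2scale c b) \<in> f2span B}"
      then obtain c where c: "x - f2scale c b \<in> f2span B" by blast
      show "x \<in> f2span B \<union> (\<lambda>x. b + x) ` f2span B"
      proof (cases "c = 0")
        case True then show ?thesis using c by (simp add: fun_bit_minus)
      next
        case False then have "c = 1" by simp
        then have "x + b \<in> f2span B" using c by (simp add: fun_bit_minus)
        moreover have "x = b + (x + b)" by (simp add: fun_eq_iff)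
        ultimately show ?thesis by blast
      qed
    next
      fix x assume "x \<in> f2span B \<union> (\<lambda>x. b + x) ` f2span B"
      then show "x \<in> {x. \<exists>c. (x - f2scale c b) \<in> f2span B}"
      proof
        assume "x \<in> f2span B" then show ?thesis
          by (intro CollectI exI[of _ 0]) (simp add: fun_bit_minus)
      next
        assume "x \<in> (\<lambda>x. b + x) ` f2span B"
        then obtain y where "y \<in> f2span B" "x = b + y" by blast
        moreover have "b + y - f2scale 1 b = y" by (simp add: fun_eq_iff)
        ultimately show ?thesis by (intro CollectI exI[of _ 1]) simp
      qed
    qed
    finally show ?thesis .
  qed
  have disj: "f2span B \<inter> (\<lambda>x. b + x) ` f2span B = {}"
  proof (rule ccontr)
    assume "f2span B \<inter> (\<lambda>x. b + x) ` f2span B \<noteq> {}"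
    then obtain y where y: "y \<in> f2span B" "b + y \<in> f2span B" by blast
    have "(b + y) + y \<in> f2span B" by (rule f2.span_add[OF y(2) y(1)])
    moreover have "(b + y) + y = b" by (simp add: fun_eq_iff)
    ultimately show False using nb by metis
  qed
  have fin: "finite (f2span B)" using insert ind by simp
  have "card (f2span (insert b B)) = card (f2span B) + card ((\<lambda>x. b + x) ` f2span B)"
    unfolding eq using disj fin by (intro card_Un_disjoint) auto
  also have "card ((\<lambda>x. b + x) ` f2span B) = card (f2span B)"
    by (rule card_image) (auto simp: inj_on_def)
  finally show ?case using insert ind fin eq by simp
qed

lemma card_subspace:
  assumes "f2subspace V" "finite V"
  shows "card V = 2 ^ f2dim V"
proof -
  obtain B where B: "B \<subseteq> V" "f2.independent B" "V \<subseteq> f2span B" "card B = f2dim V"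
    by (rule f2.basis_exists)
  have "f2span B \<subseteq> V" using B(1) assms(1) by (rule f2.span_minimal)
  then have "f2span B = V" using B(3) by blast
  moreover have "finite B" using B(1) assms(2) finite_subset by blast
  ultimately show ?thesis using card_span_indep[of B] B by simp
qed

lemma F2vec_add: "x \<in> F2vec n \<Longrightarrow> y \<in> F2vec n \<Longrightarrow> x + y \<in> F2vec n"
  by (simp add: F2vec_def)

lemma F2vec_0[simp]: "0 \<in> F2vec n"
  by (simp add: F2vec_def)

lemma concat_add: "concat k a b + concat k a' b' = concat k (a + a') (b + b')"
  by (simp add: concat_def fun_eq_iff)

lemma concat_F2vec: "a \<in> F2vec k \<Longrightarrow> b \<in> F2vec k \<Longrightarrow> concat k a b \<in> F2vec (2*k)"
  by (auto simp: concat_def F2vec_def)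

lemma concat_inj:
  assumes "concat k a b = concat k a' b'" "a \<in> F2vec k" "a' \<in> F2vec k"
  shows "a = a' \<and> b = b'"
proof
  show "a = a'"
  proof
    fix i show "a i = a' i"
    proof (cases "i < k")
      case True then show ?thesis using fun_cong[OF assms(1), of i] by (simp add: concat_def)
    next
      case False then show ?thesis using assms(2,3) by (simp add: F2vec_def)
    qed
  qed
  show "b = b'"
  proof
    fix i show "b i = b' i" using fun_cong[OF assms(1), of "i + k"] by (simp add: concat_def)
  qed
qed

lemma concat_0[simp]: "concat k 0 0 = 0"
  by (simp add: concat_def fun_eq_iff)

definition ff :: "nat \<Rightarrow> (nat\<Rightarrow>bit) \<Rightarrow> bit" where
  "ff i v = (if i \<le> 2 then v 0 else if i \<le> 4 then v 1 else v 0 + v 1)"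

definition ee :: "nat \<Rightarrow> bit" where "ee i = (if odd i then 0 else 1)"

lemma ff_add: "ff i (x + y) = ff i x + ff i y"
  by (simp add: ff_def ac_simps del: add_bit_eq_xor)

lemma ff_0[simp]: "ff i 0 = 0"
  by (simp add: ff_def)

lemma bit_cases2: "(x::bit) = 0 \<or> x = 1" by (cases x) auto

lemma Bset_eq:
  assumes "1 \<le> i" "i \<le> 6"
  shows "Bset k i = {v \<in> F2vec k. ff i v = ee i}"
proof -
  have "i = 1 \<or> i = 2 \<or> i = 3 \<or> i = 4 \<or> i = 5 \<or> i = 6" using assms by auto
  then show ?thesis
    by (elim disjE; auto simp: Bset_def ff_def ee_def)
qed

definition GG :: "nat \<Rightarrow> (nat\<Rightarrow>bit) \<Rightarrow> ((nat\<Rightarrow>bit)\<Rightarrow>(nat\<Rightarrow>bit)) \<Rightarrow> nat \<Rightarrow> (nat\<Rightarrow>bit) set" where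
  "GG k a M i = {concat k a (M x) | x. x \<in> Bset k i}"

definition EE :: "nat \<Rightarrow> (nat\<Rightarrow>bit) \<Rightarrow> ((nat\<Rightarrow>bit)\<Rightarrow>(nat\<Rightarrow>bit)) \<Rightarrow> nat \<Rightarrow> (nat\<Rightarrow>bit) set" where
  "EE k a M i = {concat k (f2scale c a) (M z) | c z. z \<in> F2vec k \<and> ff i z = c * ee i}"

locale sset =
  fixes k :: nat and a :: "nat\<Rightarrow>bit" and M :: "(nat\<Rightarrow>bit)\<Rightarrow>(nat\<Rightarrow>bit)"
  assumes k3: "k \<ge> 3" and aF: "a \<in> F2vec k" and a0: "a \<noteq> 0"
    and MF: "\<And>x. x \<in> F2vec k \<Longrightarrow> M x \<in> F2vec k"
    and Madd: "\<And>x y. x \<in> F2vec k \<Longrightarrow> y \<in> F2vec k \<Longrightarrow> M (x + y) = M x + M y"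
    and Mbij: "bij_betw M (F2vec k) (F2vec k)"
    and finF: "finite (F2vec k)"
begin

end


declare mult_bit_eq_and[simp del] add_bit_eq_xor[simp del]
context sset begin
lemma M0[simp]: "M 0 = 0" 
proof -
  have "M 0 = M (0 + 0)" by simp
  also have "\<dots> = M 0 + M 0" by (rule Madd) auto
  finally show ?thesis by simp
qed

lemma scale_aF: "f2scale c a \<in> F2vec k"
  using aF bit_cases2[of c] by auto

lemma scale_add: "f2scale c a + f2scale d a = f2scale (c + d) a"
  using bit_cases2[of c] bit_cases2[of d] by (auto simp: fun_eq_iff)

lemma e_exists: "\<exists>e \<in> F2vec k. ff i e = 1"
proof (cases "i \<le> 2 \<or> i > 4")
  case True
  have "(\<lambda>n. if n = 0 then 1 else 0 :: bit) \<in> F2vec k" using k3 by (auto simp: F2vec_def)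
  then show ?thesis using True by (intro bexI) (auto simp: ff_def)
next
  case False
  have "(\<lambda>n. if n = 1 then 1 else 0 :: bit) \<in> F2vec k" using k3 by (auto simp: F2vec_def)
  then show ?thesis using False by (intro bexI) (auto simp: ff_def)
qed

lemma E_subspace: "f2subspace (EE k a M i)"
  unfolding f2.subspace_def
proof (intro conjI ballI allI)
  show "0 \<in> EE k a M i"
    unfolding EE_def by (rule CollectI, rule exI[of _ 0], rule exI[of _ 0]) simp
next
  fix x y assume "x \<in> EE k a M i" "y \<in> EE k a M i"
  then obtain c z d w where x: "x = concat k (f2scale c a) (M z)" "z \<in> F2vec k" "ff i z = c * ee i"
    and y: "y = concat k (f2scale d a) (M w)" "w \<in> F2vec k" "ff i w = d * ee i"
    unfolding EE_def by blast
  have "x + y = concat k (f2scale (c + d) a) (M (z + w))"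
    using x y by (simp add: concat_add scale_add Madd)
  moreover have "ff i (z + w) = (c + d) * ee i" using x y by (simp add: ff_add algebra_simps del: add_bit_eq_xor mult_bit_eq_and)
  moreover have "z + w \<in> F2vec k" using x y by (simp add: F2vec_add)
  ultimately show "x + y \<in> EE k a M i" unfolding EE_def by blast
next
  fix c x assume x: "x \<in> EE k a M i"
  show "f2scale c x \<in> EE k a M i"
  proof (cases "c = 0")
    case True
    have "0 \<in> EE k a M i"
      unfolding EE_def by (rule CollectI, rule exI[of _ 0], rule exI[of _ 0]) simp
    then show ?thesis using True by simp
  next
    case False then show ?thesis using x by simp
  qed
qed

lemma G_sub_E: "1 \<le> i \<Longrightarrow> i \<le> 6 \<Longrightarrow> GG k a M i \<subseteq> EE k a M i"
proof
  fix x assume i: "1 \<le> i" "i \<le> 6" and "x \<in> GG k a M i"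
  then obtain z where z: "x = concat k a (M z)" "z \<in> F2vec k" "ff i z = ee i"
    unfolding GG_def Bset_eq[OF i] by blast
  then have "x = concat k (f2scale 1 a) (M z) \<and> z \<in> F2vec k \<and> ff i z = 1 * ee i" by simp
  then show "x \<in> EE k a M i" unfolding EE_def by blast
qed

lemma E_sub_spanG:
  assumes i: "1 \<le> i" "i \<le> 6"
  shows "EE k a M i \<subseteq> f2span (GG k a M i)"
proof
  fix x assume "x \<in> EE k a M i"
  then obtain c z where x: "x = concat k (f2scale c a) (M z)" "z \<in> F2vec k" "ff i z = c * ee i"
    unfolding EE_def by blast
  have inG: "concat k a (M w) \<in> f2span (GG k a M i)" if "w \<in> F2vec k" "ff i w = ee i" for w
  proof (rule f2.span_base)
    show "concat k a (M w) \<in> GG k a M i" unfolding GG_def Bset_eq[OF i] using that by blast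
  qed
  show "x \<in> f2span (GG k a M i)"
  proof (cases "c = 1")
    case True then show ?thesis using x inG by simp
  next
    case False
    then have c0: "c = 0" by simp
    then have x': "x = concat k 0 (M z)" "ff i z = 0" using x by auto
    show ?thesis
    proof (cases "ee i = 0")
      case True
      have "concat k a (M 0) + concat k a (M z) \<in> f2span (GG k a M i)"
        using True x' x(2) by (intro f2.span_add inG) auto
      then show ?thesis using x' by (simp add: concat_add)
    next
      case False
      then have ee1: "ee i = 1" by simp
      obtain e where e: "e \<in> F2vec k" "ff i e = 1" using e_exists by blast
      have ze: "z + e \<in> F2vec k" using x(2) e(1) by (rule F2vec_add)
      have "ff i (z + e) = ee i" using ee1 x' e by (simp add: ff_add)
      then have "concat k a (M (z + e)) + concat k a (M e) \<in> f2span (GG k a M i)"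
        using ee1 e ze by (intro f2.span_add inG) auto
      moreover have "M (z + e) + M e = M z"
        using x(2) e by (simp add: Madd add.assoc)
      ultimately show ?thesis using x' by (simp add: concat_add)
    qed
  qed
qed

lemma spanG: "1 \<le> i \<Longrightarrow> i \<le> 6 \<Longrightarrow> f2span (GG k a M i) = EE k a M i"
  by (rule antisym[OF f2.span_minimal[OF G_sub_E E_subspace] E_sub_spanG])


lemma scale_inj: "f2scale c a = f2scale d a \<Longrightarrow> c = d"
  using bit_cases2[of c] bit_cases2[of d] a0 by auto

lemma E_image: "EE k a M i = (\<lambda>(c,z). concat k (f2scale c a) (M z)) ` ({0} \<times> {z \<in> F2vec k. ff i z = 0} \<union> {1} \<times> {z \<in> F2vec k. ff i z = ee i})"
proof (rule set_eqI, rule iffI)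
  fix x assume "x \<in> EE k a M i"
  then obtain c z where x: "x = concat k (f2scale c a) (M z)" "z \<in> F2vec k" "ff i z = c * ee i"
    unfolding EE_def by blast
  then show "x \<in> (\<lambda>(c,z). concat k (f2scale c a) (M z)) ` ({0} \<times> {z \<in> F2vec k. ff i z = 0} \<union> {1} \<times> {z \<in> F2vec k. ff i z = ee i})"
    using bit_cases2[of c] by (auto intro!: image_eqI[of _ _ "(c,z)"])
next
  fix x assume "x \<in> (\<lambda>(c,z). concat k (f2scale c a) (M z)) ` ({0} \<times> {z \<in> F2vec k. ff i z = 0} \<union> {1} \<times> {z \<in> F2vec k. ff i z = ee i})"
  then obtain c z where "x = concat k (f2scale c a) (M z)" "(c = 0 \<and> z \<in> F2vec k \<and> ff i z = 0) \<or> (c = 1 \<and> z \<in> F2vec k \<and> ff i z = ee i)"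
    by auto
  then have "x = concat k (f2scale c a) (M z) \<and> z \<in> F2vec k \<and> ff i z = c * ee i" by auto
  then show "x \<in> EE k a M i" unfolding EE_def by blast
qed

lemma E_inj: "inj_on (\<lambda>(c,z). concat k (f2scale c a) (M z)) ({0} \<times> {z \<in> F2vec k. ff i z = 0} \<union> {1} \<times> {z \<in> F2vec k. ff i z = ee i})"
proof (rule inj_onI, clarify)
  fix c z d w assume cz: "(c, z) \<in> {0} \<times> {z \<in> F2vec k. ff i z = 0} \<union> {1} \<times> {z \<in> F2vec k. ff i z = ee i}"
    and dw: "(d, w) \<in> {0} \<times> {z \<in> F2vec k. ff i z = 0} \<union> {1} \<times> {z \<in> F2vec k. ff i z = ee i}"
    and eq: "concat k (f2scale c a) (M z) = concat k (f2scale d a) (M w)"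
  from concat_inj[OF eq scale_aF scale_aF] have "f2scale c a = f2scale d a" "M z = M w" by auto
  moreover have "z \<in> F2vec k" "w \<in> F2vec k" using cz dw by auto
  ultimately show "c = d \<and> z = w" using scale_inj Mbij by (auto simp: bij_betw_def inj_on_def)
qed

lemma card_K: "card {z \<in> F2vec k. ff i z = 1} = card {z \<in> F2vec k. ff i z = 0}"
proof -
  obtain e where e: "e \<in> F2vec k" "ff i e = 1" using e_exists by blast
  have "{z \<in> F2vec k. ff i z = 1} = (\<lambda>z. z + e) ` {z \<in> F2vec k. ff i z = 0}"
  proof (rule set_eqI, rule iffI)
    fix x assume x: "x \<in> {z \<in> F2vec k. ff i z = 1}"
    have "x = (x + e) + e" by (simp add: add.assoc)
    moreover have "x + e \<in> {z \<in> F2vec k. ff i z = 0}" using x e by (simp add: F2vec_add ff_add)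
    ultimately show "x \<in> (\<lambda>z. z + e) ` {z \<in> F2vec k. ff i z = 0}" by blast
  qed (use e in \<open>auto simp: F2vec_add ff_add\<close>)
  moreover have "inj_on (\<lambda>z. z + e) {z \<in> F2vec k. ff i z = 0}" by (rule inj_onI) simp
  ultimately show ?thesis by (simp add: card_image)
qed

lemma card_E: "card (EE k a M i) = card (F2vec k)" and finite_E: "finite (EE k a M i)"
proof -
  let ?K0 = "{z \<in> F2vec k. ff i z = 0}" and ?K1 = "{z \<in> F2vec k. ff i z = 1}"
    and ?Ke = "{z \<in> F2vec k. ff i z = ee i}"
  have f0: "finite ?K0" "finite ?K1" "finite ?Ke" using finF by auto
  have "F2vec k = ?K0 \<union> ?K1" using bit_cases2 by auto
  moreover have "card (?K0 \<union> ?K1) = card ?K0 + card ?K1" using f0 by (intro card_Un_disjoint) auto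
  ultimately have cF: "card (F2vec k) = card ?K0 + card ?K1" by simp
  have cKe: "card ?Ke = card ?K1"
    using bit_cases2[of "ee i"] card_K by auto
  have fin: "finite ({0::bit} \<times> ?K0 \<union> {1} \<times> ?Ke)" using f0 by auto
  have "card ({0::bit} \<times> ?K0 \<union> {1} \<times> ?Ke) = card ({0::bit} \<times> ?K0) + card ({1::bit} \<times> ?Ke)"
    using f0 by (intro card_Un_disjoint) auto
  also have "\<dots> = card ?K0 + card ?Ke" by (simp add: card_cartesian_product)
  finally have "card ({0::bit} \<times> ?K0 \<union> {1} \<times> ?Ke) = card (F2vec k)" using cF cKe by simp
  then show "card (EE k a M i) = card (F2vec k)"
    unfolding E_image by (simp add: card_image[OF E_inj])
  show "finite (EE k a M i)" unfolding E_image using fin by simp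
qed


lemma E_sub_F: "EE k a M i \<subseteq> F2vec (2*k)"
  unfolding EE_def using concat_F2vec[OF scale_aF MF] by blast

lemma concat_V0: "a' \<in> F2vec k \<Longrightarrow> b \<in> F2vec k \<Longrightarrow> concat k a' b \<in> Vset (2*k) k a' "
  using concat_F2vec[of a' k b] by (auto simp: Vset_def concat_def)

lemma E_sub_V: "EE k a M i \<subseteq> Vset (2*k) k 0 \<union> Vset (2*k) k a"
proof
  fix x assume "x \<in> EE k a M i"
  then obtain c z where x: "x = concat k (f2scale c a) (M z)" "z \<in> F2vec k"
    unfolding EE_def by blast
  then show "x \<in> Vset (2*k) k 0 \<union> Vset (2*k) k a"
    using bit_cases2[of c] concat_V0[OF _ MF[OF x(2)], of 0] concat_V0[OF aF MF[OF x(2)]] by auto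
qed

lemma mem_E:
  assumes z: "z \<in> F2vec k"
  shows "concat k a (M z) \<in> EE k a M i \<longleftrightarrow> ff i z = ee i"
proof
  assume "concat k a (M z) \<in> EE k a M i"
  then obtain c w where w: "concat k a (M z) = concat k (f2scale c a) (M w)" "w \<in> F2vec k" "ff i w = c * ee i"
    unfolding EE_def by blast
  from concat_inj[OF w(1) aF scale_aF] have "a = f2scale c a" "M z = M w" by auto
  then have "c = 1" "z = w" using scale_inj[of 1 c] Mbij z w(2) by (auto simp: bij_betw_def inj_on_def)
  then show "ff i z = ee i" using w by simp
next
  assume "ff i z = ee i"
  then have "concat k a (M z) = concat k (f2scale 1 a) (M z) \<and> z \<in> F2vec k \<and> ff i z = 1 * ee i"
    using z by simp
  then show "concat k a (M z) \<in> EE k a M i" unfolding EE_def by blast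
qed

lemma E_inj_idx:
  assumes i: "i \<in> {1..6::nat}" and i': "i' \<in> {1..6::nat}" and eq: "EE k a M i = EE k a M i'"
  shows "i = i'"
proof -
  have H: "ff i z = ee i \<longleftrightarrow> ff i' z = ee i'" if "z \<in> F2vec k" for z
    using mem_E[OF that, of i] mem_E[OF that, of i'] eq by simp
  have e0: "(\<lambda>n. if n = 0 then 1 else 0 :: bit) \<in> F2vec k" using k3 by (auto simp: F2vec_def)
  have e1: "(\<lambda>n. if n = 1 then 1 else 0 :: bit) \<in> F2vec k" using k3 by (auto simp: F2vec_def)
  note h = H[OF F2vec_0] H[OF e0] H[OF e1]
  have "i = 1 \<or> i = 2 \<or> i = 3 \<or> i = 4 \<or> i = 5 \<or> i = 6" using i by auto
  moreover have "i' = 1 \<or> i' = 2 \<or> i' = 3 \<or> i' = 4 \<or> i' = 5 \<or> i' = 6" using i' by auto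
  ultimately show ?thesis using h by (auto simp: ff_def ee_def)
qed

lemma Va_decomp:
  assumes p: "p \<in> Vset (2*k) k a"
  shows "\<exists>z \<in> F2vec k. p = concat k a (M z)"
proof -
  define b where "b = (\<lambda>n. p (n + k))"
  have bF: "b \<in> F2vec k" using p by (auto simp: b_def Vset_def F2vec_def)
  have "p = concat k a b" using p by (auto simp: fun_eq_iff concat_def b_def Vset_def)
  moreover obtain z where "z \<in> F2vec k" "b = M z" using Mbij bF by (metis bij_betw_def imageE)
  ultimately show ?thesis by blast
qed

lemma ex6: "P 1 \<or> P 2 \<or> P 3 \<or> P 4 \<or> P 5 \<or> P 6 \<Longrightarrow> \<exists>i::nat. 1 \<le> i \<and> i \<le> 6 \<and> P i"
proof (elim disjE)
  show "P 1 \<Longrightarrow> ?thesis" by (rule exI[where x = "1::nat"]) simp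
  show "P 2 \<Longrightarrow> ?thesis" by (rule exI[where x = "2::nat"]) simp
  show "P 3 \<Longrightarrow> ?thesis" by (rule exI[where x = "3::nat"]) simp
  show "P 4 \<Longrightarrow> ?thesis" by (rule exI[where x = "4::nat"]) simp
  show "P 5 \<Longrightarrow> ?thesis" by (rule exI[where x = "5::nat"]) simp
  show "P 6 \<Longrightarrow> ?thesis" by (rule exI[where x = "6::nat"]) simp
qed

lemma choose_i: "\<exists>i. 1 \<le> i \<and> i \<le> 6 \<and> ff i z = ee i \<and> ff i w = ee i"
proof -
  have "(ff 1 z = ee 1 \<and> ff 1 w = ee 1) \<or> (ff 2 z = ee 2 \<and> ff 2 w = ee 2) \<or>
        (ff 3 z = ee 3 \<and> ff 3 w = ee 3) \<or> (ff 4 z = ee 4 \<and> ff 4 w = ee 4) \<or>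
        (ff 5 z = ee 5 \<and> ff 5 w = ee 5) \<or> (ff 6 z = ee 6 \<and> ff 6 w = ee 6)"
    using bit_cases2[of "z 0"] bit_cases2[of "z 1"] bit_cases2[of "w 0"] bit_cases2[of "w 1"]
    by (auto simp: ff_def ee_def)
  then show ?thesis by (rule ex6)
qed


lemma V0_subspace: "f2subspace (Vset (2*k) k 0)"
  unfolding f2.subspace_def
proof (intro conjI ballI allI)
  show "0 \<in> Vset (2*k) k 0" by (simp add: Vset_def)
next
  fix x y assume "x \<in> Vset (2*k) k 0" "y \<in> Vset (2*k) k 0"
  then show "x + y \<in> Vset (2*k) k 0" by (auto simp: Vset_def F2vec_add)
next
  fix c x assume "x \<in> Vset (2*k) k 0"
  then show "f2scale c x \<in> Vset (2*k) k 0" using bit_cases2[of c] by (auto simp: Vset_def)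
qed

lemma Va_V0_add: "x \<in> Vset (2*k) k a \<Longrightarrow> y \<in> Vset (2*k) k 0 \<Longrightarrow> x + y \<in> Vset (2*k) k a"
  by (auto simp: Vset_def F2vec_add)

lemma two_Va:
  assumes "p \<in> Vset (2*k) k a" "q \<in> Vset (2*k) k a"
  shows "\<exists>i. 1 \<le> i \<and> i \<le> 6 \<and> p \<in> EE k a M i \<and> q \<in> EE k a M i"
proof -
  obtain z w where z: "z \<in> F2vec k" "p = concat k a (M z)" and w: "w \<in> F2vec k" "q = concat k a (M w)"
    using Va_decomp assms by meson
  obtain i where "1 \<le> i \<and> i \<le> 6 \<and> ff i z = ee i \<and> ff i w = ee i" using choose_i by blast
  then show ?thesis using mem_E[OF z(1), of i] mem_E[OF w(1), of i] z w by blast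
qed

lemma part3:
  assumes X: "f2subspace X" "f2dim X = 2" "X \<subseteq> Vset (2*k) k 0 \<union> Vset (2*k) k a"
    "\<not> X \<subseteq> Vset (2*k) k 0"
  shows "\<exists>i. 1 \<le> i \<and> i \<le> 6 \<and> X \<subseteq> EE k a M i"
proof -
  obtain B where B: "B \<subseteq> X" "f2.independent B" "X \<subseteq> f2span B" "card B = f2dim X"
    by (rule f2.basis_exists)
  then obtain u v where uv: "B = {u, v}" using X(2) by (metis card_2_iff)
  have u: "u \<in> X" and v: "v \<in> X" using B(1) uv by auto
  have key: "\<exists>i. 1 \<le> i \<and> i \<le> 6 \<and> u \<in> EE k a M i \<and> v \<in> EE k a M i"
  proof (cases "u \<in> Vset (2*k) k a")
    case ua: True
    show ?thesis
    proof (cases "v \<in> Vset (2*k) k a")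
      case True then show ?thesis using two_Va ua by blast
    next
      case False
      then have v0: "v \<in> Vset (2*k) k 0" using v X(3) by blast
      have "u + v \<in> Vset (2*k) k a" using ua v0 by (rule Va_V0_add)
      then obtain i where i: "1 \<le> i" "i \<le> 6" "u \<in> EE k a M i" "u + v \<in> EE k a M i"
        using two_Va ua by blast
      have "u + (u + v) \<in> EE k a M i" using i E_subspace f2.subspace_add by blast
      moreover have "u + (u + v) = v" by (simp add: add.assoc[symmetric])
      ultimately show ?thesis using i by auto
    qed
  next
    case False
    then have u0: "u \<in> Vset (2*k) k 0" using u X(3) by blast
    show ?thesis
    proof (cases "v \<in> Vset (2*k) k a")
      case va: True
      have "v + u \<in> Vset (2*k) k a" using va u0 by (rule Va_V0_add)
      then obtain i where i: "1 \<le> i" "i \<le> 6" "v \<in> EE k a M i" "v + u \<in> EE k a M i"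
        using two_Va va by blast
      have "v + (v + u) \<in> EE k a M i" using i E_subspace f2.subspace_add by blast
      moreover have "v + (v + u) = u" by (simp add: add.assoc[symmetric])
      ultimately show ?thesis using i by auto
    next
      case False
      then have v0: "v \<in> Vset (2*k) k 0" using v X(3) by blast
      have "f2span B \<subseteq> Vset (2*k) k 0"
        using uv u0 v0 V0_subspace by (intro f2.span_minimal) auto
      then show ?thesis using B(3) X(4) by blast
    qed
  qed
  then obtain i where i: "1 \<le> i" "i \<le> 6" "u \<in> EE k a M i" "v \<in> EE k a M i" by blast
  have "f2span B \<subseteq> EE k a M i" using uv i E_subspace by (intro f2.span_minimal) auto
  then show ?thesis using B(3) i by blast
qed

end

lemma alpha_nz:
  fixes \<alpha> :: "'a::{field,finite}"
  assumes "primitive_elem \<alpha>" "card (UNIV :: 'a set) = 2 ^ k" "k \<ge> 3"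
  shows "\<alpha> \<noteq> 0"
proof
  assume a: "\<alpha> = 0"
  have "UNIV - {0} \<subseteq> {1::'a}"
  proof
    fix y :: 'a assume "y \<in> UNIV - {0}"
    then obtain n where "y = \<alpha> ^ n" using assms(1) unfolding primitive_elem_def by blast
    then show "y \<in> {1}" using \<open>y \<in> UNIV - {0}\<close> a by (cases n) auto
  qed
  then have "UNIV \<subseteq> {0, 1::'a}" by blast
  then have "card (UNIV :: 'a set) \<le> card {0, 1::'a}" by (intro card_mono) auto
  then have "card (UNIV :: 'a set) \<le> 2" by simp
  moreover have "(2::nat) ^ k \<ge> 2 ^ 3" using assms(3) by (intro power_increasing) auto
  ultimately show False using assms(2) by simp
qed

theorem mainTheorem6:
  fixes k j :: nat and \<phi> :: "(nat \<Rightarrow> bit) \<Rightarrow> 'a::{field,finite}" and \<alpha> :: 'a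
  assumes "k \<ge> 3"
    and "card (UNIV :: 'a set) = 2 ^ k"
    and "bij_betw \<phi> (F2vec k) UNIV"
    and "\<And>v w. v \<in> F2vec k \<Longrightarrow> w \<in> F2vec k \<Longrightarrow> \<phi> (v + w) = \<phi> v + \<phi> w"
    and "primitive_elem \<alpha>"
    and "j \<le> 2 ^ k - 2"
  shows "card (SSj k \<phi> \<alpha> j) = 6
    \<and> (\<forall>W \<in> SSj k \<phi> \<alpha> j. f2subspace W \<and> W \<subseteq> F2vec (2*k) \<and> f2dim W = k
          \<and> W \<subseteq> Vset (2*k) k 0 \<union> Vset (2*k) k (inv_into (F2vec k) \<phi> (\<alpha> ^ j)))
    \<and> (\<forall>X. f2subspace X \<and> f2dim X = 2
          \<and> X \<subseteq> Vset (2*k) k 0 \<union> Vset (2*k) k (inv_into (F2vec k) \<phi> (\<alpha> ^ j))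
          \<and> \<not> X \<subseteq> Vset (2*k) k 0
          \<longrightarrow> (\<exists>W \<in> SSj k \<phi> \<alpha> j. X \<subseteq> W))"
proof -
  note bij = assms(3) and phiadd = assms(4)
  define \<psi> where "\<psi> = inv_into (F2vec k) \<phi>"
  have psiF: "\<psi> y \<in> F2vec k" for y
    unfolding \<psi>_def using bij by (metis bij_betw_def inv_into_into UNIV_I)
  have phipsi: "\<phi> (\<psi> y) = y" for y
    unfolding \<psi>_def using bij by (metis bij_betw_def f_inv_into_f UNIV_I)
  have phiinj: "x = y" if "x \<in> F2vec k" "y \<in> F2vec k" "\<phi> x = \<phi> y" for x y
    using bij that by (auto simp: bij_betw_def inj_on_def)
  have psiphi: "\<psi> (\<phi> x) = x" if "x \<in> F2vec k" for x
    using phiinj[OF psiF that] phipsi by simp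
  have psi_add: "\<psi> (y + y') = \<psi> y + \<psi> y'" for y y'
    by (rule phiinj) (auto simp: psiF F2vec_add phipsi phiadd)
  have phi0: "\<phi> 0 = 0"
  proof -
    have "\<phi> 0 = \<phi> (0 + 0)" by simp
    also have "\<dots> = \<phi> 0 + \<phi> 0" by (rule phiadd) auto
    finally show ?thesis by (metis add_cancel_right_right)
  qed
  have aj: "\<alpha> ^ j \<noteq> 0" using alpha_nz[OF assms(5,2,1)] by simp
  have finF: "finite (F2vec k)" using bij bij_betw_finite finite_UNIV by blast
  have cardF: "card (F2vec k) = 2 ^ k" using bij_betw_same_card[OF bij] assms(2) by simp
  define M where "M = (\<lambda>x. \<psi> (\<alpha> ^ j * \<phi> x))"
  interpret sset k "\<psi> (\<alpha> ^ j)" M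
  proof
    show "k \<ge> 3" by (rule assms(1))
    show "\<psi> (\<alpha> ^ j) \<in> F2vec k" by (rule psiF)
    show "\<psi> (\<alpha> ^ j) \<noteq> 0" using phipsi[of "\<alpha> ^ j"] phi0 aj by auto
    show "M x \<in> F2vec k" for x by (simp add: M_def psiF)
    show "M (x + y) = M x + M y" if "x \<in> F2vec k" "y \<in> F2vec k" for x y
      using that by (simp add: M_def phiadd distrib_left psi_add)
    show "finite (F2vec k)" by (rule finF)
    show "bij_betw M (F2vec k) (F2vec k)"
      unfolding bij_betw_def
    proof
      show "inj_on M (F2vec k)"
      proof (rule inj_onI)
        fix x y assume xy: "x \<in> F2vec k" "y \<in> F2vec k" "M x = M y"
        then have "\<alpha> ^ j * \<phi> x = \<alpha> ^ j * \<phi> y" unfolding M_def by (metis phipsi)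
        then have "\<phi> x = \<phi> y" using aj mult_cancel_left by blast
        then show "x = y" using phiinj xy by blast
      qed
      show "M ` F2vec k = F2vec k"
      proof
        show "M ` F2vec k \<subseteq> F2vec k" by (auto simp: M_def psiF)
        show "F2vec k \<subseteq> M ` F2vec k"
        proof
          fix b assume b: "b \<in> F2vec k"
          have "M (\<psi> (\<phi> b / \<alpha> ^ j)) = b" unfolding M_def using aj psiphi[OF b] by (simp add: phipsi)
          then show "b \<in> M ` F2vec k" using psiF by (metis imageI)
        qed
      qed
    qed
  qed
  have Sj_eq: "Sj k \<phi> \<alpha> j = (\<lambda>i. GG k (\<psi> (\<alpha> ^ j)) M i) ` {1..6}"
    unfolding Sj_def GG_def M_def \<psi>_def by (auto simp: image_def)
  have SSj_eq: "SSj k \<phi> \<alpha> j = (\<lambda>i. EE k (\<psi> (\<alpha> ^ j)) M i) ` {1..6}"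
    unfolding SSj_def Sj_eq image_image by (rule image_cong) (auto simp: spanG)
  have c6: "card (SSj k \<phi> \<alpha> j) = 6"
    unfolding SSj_eq by (subst card_image) (auto intro!: inj_onI E_inj_idx)
  have p2: "\<forall>W \<in> SSj k \<phi> \<alpha> j. f2subspace W \<and> W \<subseteq> F2vec (2*k) \<and> f2dim W = k
          \<and> W \<subseteq> Vset (2*k) k 0 \<union> Vset (2*k) k (\<psi> (\<alpha> ^ j))"
  proof
    fix W assume "W \<in> SSj k \<phi> \<alpha> j"
    then obtain i where W: "W = EE k (\<psi> (\<alpha> ^ j)) M i" unfolding SSj_eq by blast
    have "(2::nat) ^ f2dim W = 2 ^ k"
      using card_subspace[OF E_subspace finite_E] card_E cardF W by simp
    then have "f2dim W = k" by (simp add: power_inject_exp)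
    then show "f2subspace W \<and> W \<subseteq> F2vec (2*k) \<and> f2dim W = k
          \<and> W \<subseteq> Vset (2*k) k 0 \<union> Vset (2*k) k (\<psi> (\<alpha> ^ j))"
      by (simp add: W E_subspace E_sub_F E_sub_V)
  qed
  have p3: "\<forall>X. f2subspace X \<and> f2dim X = 2
          \<and> X \<subseteq> Vset (2*k) k 0 \<union> Vset (2*k) k (\<psi> (\<alpha> ^ j))
          \<and> \<not> X \<subseteq> Vset (2*k) k 0
          \<longrightarrow> (\<exists>W \<in> SSj k \<phi> \<alpha> j. X \<subseteq> W)"
  proof (intro allI impI)
    fix X assume "f2subspace X \<and> f2dim X = 2
          \<and> X \<subseteq> Vset (2*k) k 0 \<union> Vset (2*k) k (\<psi> (\<alpha> ^ j))
          \<and> \<not> X \<subseteq> Vset (2*k) k 0"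
    then have "\<exists>i. 1 \<le> i \<and> i \<le> 6 \<and> X \<subseteq> EE k (\<psi> (\<alpha> ^ j)) M i"
      by (elim conjE) (rule part3)
    then obtain i where "1 \<le> i" "i \<le> 6" "X \<subseteq> EE k (\<psi> (\<alpha> ^ j)) M i" by blast
    then show "\<exists>W \<in> SSj k \<phi> \<alpha> j. X \<subseteq> W" unfolding SSj_eq
      by (intro bexI[of _ "EE k (\<psi> (\<alpha> ^ j)) M i"] imageI) auto
  qed
  show ?thesis using c6 p2 p3 unfolding \<psi>_def by (rule conjI[OF _ conjI])
qed
end
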